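(* Let $K$ be a number field and let $\alpha=p/q$ be a positive rational number with $\gcd(p,q)=1$ which is not an integer and is not of the form $1/n$ for an integer $n$. Let $F\in K((x))$ be a Laurent series such that there exist $d\ge 0$ and polynomials $P_0,\dots,P_d\in K[x]$ with $P_d\ne0$ and $\sum_{i=0}^d P_i(x)F(x^{\alpha^i})=0$. Then $F(x^{\alpha^i})$ is a Laurent series (i.e. has support contained in $\mathbb{Z}$ and bounded below) for each $i=0,1,\dots,d$.
   Context: For a Laurent series $F=\sum_i f_ix^i$ and $\gamma>0$, $F(x^\gamma)=\sum_i f_i x^{\gamma i}$, regarded as a Hahn series (formal series with well-ordered support in $\mathbb{R}$); the equation holds in the field of such Hahn series over $K$. *)

theory Defs
  imports Complex_Main "HOL-Computational_Algebra.Polynomial" "HOL-Computational_Algebra.Formal_Laurent_Series"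
begin

definition number_field :: "'a::field_char_0 itself \<Rightarrow> bool" where
  "number_field _ \<longleftrightarrow>
     (\<exists>B::'a set. finite B \<and> (\<forall>x::'a. \<exists>c::'a \<Rightarrow> rat. x = (\<Sum>b\<in>B. of_rat (c b) * b)))"

text \<open>Hahn series over \<open>'a\<close> with real exponents are represented by their coefficient
  functions \<open>real \<Rightarrow> 'a\<close>.  The coefficient of \<open>x^e\<close> in \<open>F(x^\<gamma>) = \<Sum> f_n x^(\<gamma> n)\<close>:\<close>
definition fls_subst_coeff :: "'a::comm_monoid_add fls \<Rightarrow> real \<Rightarrow> real \<Rightarrow> 'a" where
  "fls_subst_coeff F \<gamma> e = (\<Sum>n\<in>{n::int. \<gamma> * of_int n = e}. fls_nth F n)"

definition poly_times_coeff :: "'a::comm_semiring_1 poly \<Rightarrow> (real \<Rightarrow> 'a) \<Rightarrow> real \<Rightarrow> 'a" where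
  "poly_times_coeff P g e = (\<Sum>k\<le>degree P. coeff P k * g (e - real k))"

definition hahn_support :: "(real \<Rightarrow> 'a::zero) \<Rightarrow> real set" where
  "hahn_support g = {e. g e \<noteq> 0}"

definition is_laurent_hahn :: "(real \<Rightarrow> 'a::zero) \<Rightarrow> bool" where
  "is_laurent_hahn g \<longleftrightarrow> hahn_support g \<subseteq> \<int> \<and> bdd_below (hahn_support g)"

end

theory Submission
  imports Defs
begin

lemma subst_nz:
  assumes "fls_subst_coeff F \<gamma> y \<noteq> 0"
  shows "\<exists>n. y = \<gamma> * of_int n \<and> fls_nth F n \<noteq> 0"
proof -
  from assms obtain n where "n \<in> {n::int. \<gamma> * of_int n = y}" "fls_nth F n \<noteq> 0"
    unfolding fls_subst_coeff_def by (meson sum.not_neutral_contains_not_neutral)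
  then show ?thesis by auto
qed

lemma subst_eq:
  assumes "\<gamma> > 0"
  shows "fls_subst_coeff F \<gamma> (\<gamma> * of_int n) = fls_nth F n"
proof -
  have "{m::int. \<gamma> * of_int m = \<gamma> * of_int n} = {n}" using assms by auto
  then show ?thesis unfolding fls_subst_coeff_def by simp
qed

lemma key:
  fixes F :: "'a::field_char_0 fls" and p q :: int and d :: nat and P :: "nat \<Rightarrow> 'a poly"
  assumes pp: "p > 0" and qq: "q > 1" and cop: "coprime p q" and Pd: "P d \<noteq> 0"
    and eq: "\<forall>e::real. (\<Sum>i\<le>d. poly_times_coeff (P i) (fls_subst_coeff F ((of_int p / of_int q) ^ i)) e) = 0"
    and n0: "fls_nth F n0 \<noteq> 0"
  shows "q ^ d dvd n0"
proof (rule ccontr)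
  assume nd: "\<not> q ^ d dvd n0"
  define S where "S = {n. fls_nth F n \<noteq> 0}"
  have "d \<noteq> 0" using nd by (cases d) auto
  then have ex: "\<exists>n\<in>S. \<not> q ^ Suc (d - 1) dvd n" using nd n0 by (auto simp: S_def)
  define t where "t = (LEAST j. \<exists>n\<in>S. \<not> q ^ Suc j dvd n)"
  have t1: "\<exists>n\<in>S. \<not> q ^ Suc t dvd n" unfolding t_def by (rule LeastI_ex) (use ex in blast)
  have t2: "\<forall>n\<in>S. q ^ t dvd n"
  proof (cases t)
    case 0 then show ?thesis by simp
  next
    case (Suc j)
    then have "j < t" by simp
    then have "\<not> (\<exists>n\<in>S. \<not> q ^ Suc j dvd n)" unfolding t_def by (rule not_less_Least)
    then show ?thesis using Suc by auto
  qed
  have "t \<le> d - 1" unfolding t_def by (rule Least_le) (use ex in blast)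
  then have td: "Suc t \<le> d" using \<open>d \<noteq> 0\<close> by simp
  define T where "T = {n\<in>S. \<not> q ^ Suc t dvd n}"
  define sd where "sd = fls_subdegree F"
  have sdle: "\<forall>m\<in>S. sd \<le> m" by (auto simp: S_def sd_def intro: fls_subdegree_leI)
  have exT: "\<exists>m::nat. sd + int m \<in> T"
  proof -
    obtain n where "n \<in> T" using t1 by (auto simp: T_def)
    then have "sd + int (nat (n - sd)) \<in> T" using sdle by (auto simp: T_def)
    then show ?thesis by blast
  qed
  define m0 where "m0 = (LEAST m::nat. sd + int m \<in> T)"
  define n1 where "n1 = sd + int m0"
  have n1T: "n1 \<in> T" unfolding n1_def m0_def by (rule LeastI_ex) (rule exT)
  have n1min: "\<forall>m\<in>T. n1 \<le> m"
  proof
    fix m assume mT: "m \<in> T"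
    then have "sd \<le> m" using sdle by (auto simp: T_def)
    then have "sd + int (nat (m - sd)) \<in> T" using mT by simp
    then have "m0 \<le> nat (m - sd)" unfolding m0_def by (rule Least_le)
    then show "n1 \<le> m" using \<open>sd \<le> m\<close> by (simp add: n1_def)
  qed
  have exk: "\<exists>k. coeff (P d) k \<noteq> 0" using Pd by (metis leading_coeff_0_iff)
  define k0 where "k0 = (LEAST k. coeff (P d) k \<noteq> 0)"
  have k0nz: "coeff (P d) k0 \<noteq> 0" unfolding k0_def by (rule LeastI_ex) (rule exk)
  have k0deg: "k0 \<le> degree (P d)" using k0nz le_degree by blast
  have k0min: "\<forall>k<k0. coeff (P d) k = 0" unfolding k0_def using not_less_Least by blast
  define \<gamma> where "\<gamma> = (\<lambda>i::nat. (of_int p / of_int q :: real) ^ i)"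
  have \<gamma>pos: "\<gamma> i > 0" for i using pp qq by (simp add: \<gamma>_def)
  define e where "e = \<gamma> d * of_int n1 + real k0"
  have qdpos: "(of_int q :: real) \<noteq> 0" using qq by simp
  have claim: "i = d \<and> k = k0"
    if i: "i \<le> d" and ck: "coeff (P i) k \<noteq> 0" and cs: "fls_subst_coeff F (\<gamma> i) (e - real k) \<noteq> 0" for i k
  proof -
    obtain n' where n': "e - real k = \<gamma> i * of_int n'" "fls_nth F n' \<noteq> 0"
      using subst_nz[OF cs] by blast
    have n'S: "n' \<in> S" using n' by (simp add: S_def)
    have qsplit: "(of_int q :: real) ^ d = of_int q ^ i * of_int q ^ (d - i)"
      using i by (metis le_add_diff_inverse power_add)
    have "(of_int q :: real) ^ d * (\<gamma> i * of_int n') = of_int q ^ d * (\<gamma> d * of_int n1 + real k0 - real k)"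
      using n' by (simp add: e_def)
    moreover have "(of_int q :: real) ^ d * (\<gamma> i * of_int n') = of_int p ^ i * of_int q ^ (d - i) * of_int n'"
      using qdpos by (simp add: \<gamma>_def qsplit power_divide)
    moreover have "(of_int q :: real) ^ d * (\<gamma> d * of_int n1 + real k0 - real k)
        = of_int p ^ d * of_int n1 + of_int q ^ d * (real k0 - real k)"
      using qdpos by (simp add: \<gamma>_def power_divide algebra_simps)
    ultimately have "real_of_int (p ^ i * q ^ (d - i) * n') = real_of_int (p ^ d * n1 + q ^ d * (int k0 - int k))"
      by simp
    then have ieq: "p ^ i * q ^ (d - i) * n' = p ^ d * n1 + q ^ d * (int k0 - int k)"
      by (simp only: of_int_eq_iff)
    have dvdqd: "q ^ Suc t dvd q ^ d * x" for x using td by (meson dvd_mult2 le_imp_power_dvd)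
    have notdvd: "\<not> q ^ Suc t dvd p ^ d * n1"
    proof
      assume "q ^ Suc t dvd p ^ d * n1"
      moreover have "coprime (q ^ Suc t) (p ^ d)" using cop by (simp add: coprime_commute)
      ultimately have "q ^ Suc t dvd n1" by (simp add: coprime_dvd_mult_right_iff)
      then show False using n1T by (simp add: T_def)
    qed
    show ?thesis
    proof (cases "i < d")
      case True
      have "q dvd q ^ (d - i)" using True by (simp add: dvd_power)
      moreover have "q ^ t dvd n'" using t2 n'S by blast
      ultimately have "q * q ^ t dvd q ^ (d - i) * n'" by (rule mult_dvd_mono)
      then have "q ^ Suc t dvd p ^ i * q ^ (d - i) * n'" by (simp add: mult.assoc)
      then have "q ^ Suc t dvd p ^ d * n1 + q ^ d * (int k0 - int k)" using ieq by simp
      then have "q ^ Suc t dvd p ^ d * n1" using dvdqd by (simp add: dvd_add_left_iff)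
      then show ?thesis using notdvd by simp
    next
      case False
      then have id: "i = d" using i by simp
      have "k \<ge> k0" using ck k0min id by (meson not_le)
      have ieq2: "p ^ d * n' = p ^ d * n1 + q ^ d * (int k0 - int k)" using ieq id by simp
      show ?thesis
      proof (rule ccontr)
        assume "\<not> ?thesis"
        then have "k > k0" using id \<open>k \<ge> k0\<close> by simp
        then have "q ^ d * (int k0 - int k) < 0" using qq by (simp add: mult_pos_neg)
        then have "p ^ d * n' < p ^ d * n1" using ieq2 by simp
        then have lt: "n' < n1" using pp by (simp add: mult_less_cancel_left)
        have "\<not> q ^ Suc t dvd n'"
        proof
          assume "q ^ Suc t dvd n'"
          then have "q ^ Suc t dvd p ^ d * n'" by simp
          then have "q ^ Suc t dvd p ^ d * n1 + q ^ d * (int k0 - int k)" using ieq2 by simp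
          then have "q ^ Suc t dvd p ^ d * n1" using dvdqd by (simp add: dvd_add_left_iff)
          then show False using notdvd by simp
        qed
        then have "n' \<in> T" using n'S by (simp add: T_def)
        then show False using n1min lt by force
      qed
    qed
  qed
  have other: "poly_times_coeff (P i) (fls_subst_coeff F (\<gamma> i)) e = 0" if "i \<le> d" "i \<noteq> d" for i
    unfolding poly_times_coeff_def using claim that by (intro sum.neutral) auto
  have main: "poly_times_coeff (P d) (fls_subst_coeff F (\<gamma> d)) e = coeff (P d) k0 * fls_nth F n1"
  proof -
    have "poly_times_coeff (P d) (fls_subst_coeff F (\<gamma> d)) e
       = coeff (P d) k0 * fls_subst_coeff F (\<gamma> d) (e - real k0)
         + (\<Sum>k\<in>{..degree (P d)} - {k0}. coeff (P d) k * fls_subst_coeff F (\<gamma> d) (e - real k))"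
      unfolding poly_times_coeff_def using k0deg by (subst sum.remove[of _ k0]) auto
    also have "(\<Sum>k\<in>{..degree (P d)} - {k0}. coeff (P d) k * fls_subst_coeff F (\<gamma> d) (e - real k)) = 0"
      using claim by (intro sum.neutral) auto
    also have "e - real k0 = \<gamma> d * of_int n1" by (simp add: e_def)
    finally show ?thesis using subst_eq[OF \<gamma>pos[of d], of F n1] by simp
  qed
  have "(\<Sum>i\<le>d. poly_times_coeff (P i) (fls_subst_coeff F (\<gamma> i)) e)
      = poly_times_coeff (P d) (fls_subst_coeff F (\<gamma> d)) e
        + (\<Sum>i\<in>{..d} - {d}. poly_times_coeff (P i) (fls_subst_coeff F (\<gamma> i)) e)"
    by (subst sum.remove[of _ d]) auto
  also have "(\<Sum>i\<in>{..d} - {d}. poly_times_coeff (P i) (fls_subst_coeff F (\<gamma> i)) e) = 0"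
    using other by (intro sum.neutral) auto
  finally have "(\<Sum>i\<le>d. poly_times_coeff (P i) (fls_subst_coeff F (\<gamma> i)) e) = coeff (P d) k0 * fls_nth F n1"
    using main by simp
  moreover have "fls_nth F n1 \<noteq> 0" using n1T by (simp add: T_def S_def)
  ultimately have "(\<Sum>i\<le>d. poly_times_coeff (P i) (fls_subst_coeff F (\<gamma> i)) e) \<noteq> 0"
    using k0nz by simp
  then show False using eq by (simp add: \<gamma>_def)
qed

theorem mainTheorem5:
  fixes F :: "'a::field_char_0 fls" and \<alpha> :: rat and d :: nat and P :: "nat \<Rightarrow> 'a poly"
  assumes "number_field TYPE('a)"
    and "\<alpha> > 0" and "\<alpha> \<notin> \<int>" and "\<forall>n::int. \<alpha> \<noteq> 1 / of_int n"
    and "P d \<noteq> 0"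
    and "\<forall>e::real. (\<Sum>i\<le>d. poly_times_coeff (P i) (fls_subst_coeff F (of_rat \<alpha> ^ i)) e) = 0"
  shows "\<forall>i\<le>d. is_laurent_hahn (fls_subst_coeff F (of_rat \<alpha> ^ i))"
proof -
  obtain p q where qo: "quotient_of \<alpha> = (p, q)" by (cases "quotient_of \<alpha>") auto
  have aeq: "\<alpha> = of_int p / of_int q" using quotient_of_div[OF qo] .
  have qpos: "q > 0" using quotient_of_denom_pos[OF qo] .
  have cop: "coprime p q" using quotient_of_coprime[OF qo] .
  have "p > 0" using assms(2) qpos by (simp add: aeq zero_less_divide_iff)
  have "q \<noteq> 1" using assms(3) aeq by auto
  then have q1: "q > 1" using qpos by simp
  have ra: "(of_rat \<alpha> :: real) = of_int p / of_int q" by (simp add: aeq of_rat_divide)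
  have H: "\<forall>n. fls_nth F n \<noteq> 0 \<longrightarrow> q ^ d dvd n"
    using key[of p q P d F, OF \<open>p > 0\<close> q1 cop assms(5)] assms(6) by (simp add: ra)
  show ?thesis
  proof (intro allI impI)
    fix i assume i: "i \<le> d"
    define \<gamma> where "\<gamma> = (of_int p / of_int q :: real) ^ i"
    have gpos: "\<gamma> > 0" using \<open>p > 0\<close> qpos by (simp add: \<gamma>_def)
    have qsplit: "(of_int q :: real) ^ d = of_int q ^ i * of_int q ^ (d - i)"
      using i by (metis le_add_diff_inverse power_add)
    have qdpos: "(of_int q :: real) \<noteq> 0" using qpos by simp
    have sub: "hahn_support (fls_subst_coeff F \<gamma>) \<subseteq> \<int>"
    proof
      fix y assume "y \<in> hahn_support (fls_subst_coeff F \<gamma>)"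
      then obtain n where n: "y = \<gamma> * of_int n" "fls_nth F n \<noteq> 0"
        using subst_nz unfolding hahn_support_def by blast
      obtain m where m: "n = q ^ d * m" using H n(2) by blast
      have "y = of_int (p ^ i * q ^ (d - i) * m)"
        using qdpos by (simp add: n(1) m \<gamma>_def qsplit power_divide)
      then show "y \<in> \<int>" by simp
    qed
    have bdd: "bdd_below (hahn_support (fls_subst_coeff F \<gamma>))"
    proof (rule bdd_belowI)
      fix y assume "y \<in> hahn_support (fls_subst_coeff F \<gamma>)"
      then obtain n where n: "y = \<gamma> * of_int n" "fls_nth F n \<noteq> 0"
        using subst_nz unfolding hahn_support_def by blast
      have "fls_subdegree F \<le> n" using n(2) by (rule fls_subdegree_leI)
      then show "\<gamma> * of_int (fls_subdegree F) \<le> y"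
        using gpos by (simp add: n(1))
    qed
    show "is_laurent_hahn (fls_subst_coeff F (of_rat \<alpha> ^ i))"
      using sub bdd by (simp add: is_laurent_hahn_def \<gamma>_def ra)
  qed
qed

end
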